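(* Let $k\in\mathbb{N}_0\cup\{\infty\}$, let $E,F$ be locally convex super vector spaces, $\mathcal{U}\subseteq\overline{E}^{(k)}$ an open subfunctor and $f\colon\mathcal{U}\to\overline{F}^{(k)}$ a natural transformation such that every $f_\Lambda$ ($\Lambda\in\mathbf{Gr}^{(k)}$) is smooth. Let $n,m\in\mathbb{N}$ with $\Lambda_m\in\mathbf{Gr}^{(k)}$, let $x\in\mathcal{U}_{\mathbb{R}}\subseteq\mathcal{U}_{\Lambda_m}$, and for $1\le i\le n$ let $y_i\in\lambda_{I_i}E_{|I_i|\bmod 2}\subseteq\overline{E}^{(k)}_{\Lambda_m}$ with $\emptyset\neq I_i\subseteq\{1,\dots,m\}$. Then $$d^nf_{\Lambda_m}(x)(y_1,\dots,y_n)\in\lambda_{I_1}\cdots\lambda_{I_n}F_{\ell\bmod 2},\qquad \ell:=\Big|\bigcup_{i=1}^nI_i\Big|,$$ and if the sets $I_1,\dots,I_n$ are not pairwise disjoint, then $d^nf_{\Lambda_m}(x)(y_1,\dots,y_n)=0$.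
   Context: Grassmann algebras: $\Lambda_k=\mathbb{R}[\lambda_1,\dots,\lambda_k]$ with $\lambda_i\lambda_j=-\lambda_j\lambda_i$, $\Lambda_0=\mathbb{R}$, basis $\lambda_I$ ($I\subseteq\{1..k\}$, $\lambda_I=\lambda_{i_1}\cdots\lambda_{i_r}$ for $i_1<\dots<i_r$), grading $\Lambda_{\bar 0},\Lambda_{\bar 1}$ by parity of $|I|$. $\mathbf{Gr}^{(k)}$: category of $\Lambda_0,\dots,\Lambda_k$ with parity-preserving unital algebra homomorphisms. For a locally convex super vector space $E=E_0\oplus E_1$, $\overline{E}^{(k)}_\Lambda=(E_0\otimes\Lambda_{\bar0})\oplus(E_1\otimes\Lambda_{\bar1})$ (product topology), functorial via $\mathrm{id}\otimes\varrho$; for $n\le m$ we identify $\overline{E}^{(k)}_{\Lambda_n}\subseteq\overline{E}^{(k)}_{\Lambda_m}$ via the inclusion $\Lambda_n\hookrightarrow\Lambda_m$, $\lambda_j\mapsto\lambda_j$; in particular $\overline{E}_{\mathbb{R}}=E_0$ and $\mathcal{U}_{\mathbb{R}}\subseteq\mathcal{U}_{\Lambda_m}$. An open subfunctor $\mathcal{U}$ consists of open $\mathcal{U}_\Lambda\subseteq\overline{E}^{(k)}_\Lambda$ stable under all $\overline{E}^{(k)}_\varrho$. Smoothness is Bastiani smoothness; $d^n$ denotes iterated directional derivatives. *)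

theory Defs
  imports "HOL-Analysis.Analysis" "HOL-Library.Extended_Nat"
begin

class lcs = real_vector + topological_ab_group_add + t2_space +
  assumes scaleR_continuous: "open W \<Longrightarrow> c *\<^sub>R x \<in> W \<Longrightarrow>
     \<exists>\<epsilon>>0. \<exists>V. open V \<and> x \<in> V \<and> (\<forall>d y. \<bar>d - c\<bar> < \<epsilon> \<longrightarrow> y \<in> V \<longrightarrow> d *\<^sub>R y \<in> W)"
  assumes locally_convex:
    "open U \<Longrightarrow> x \<in> U \<Longrightarrow> \<exists>V. open V \<and> x \<in> V \<and> V \<subseteq> U \<and>
       (\<forall>u\<in>V. \<forall>w\<in>V. \<forall>t::real. 0 \<le> t \<and> t \<le> 1 \<longrightarrow> t *\<^sub>R u + (1 - t) *\<^sub>R w \<in> V)"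

text \<open>A locally convex super vector space: E = E0 (+) E1 as a topological direct sum
  of (closed) subspaces.\<close>
definition super_lcs :: "'e::lcs set \<Rightarrow> 'e set \<Rightarrow> bool" where
  "super_lcs E0 E1 \<longleftrightarrow> subspace E0 \<and> subspace E1 \<and> E0 \<inter> E1 = {0} \<and>
     (\<forall>v. \<exists>a\<in>E0. \<exists>b\<in>E1. v = a + b) \<and>
     (\<exists>p. continuous_on UNIV p \<and> (\<forall>a\<in>E0. \<forall>b\<in>E1. p (a + b) = a))"

definition parity_part :: "'e set \<Rightarrow> 'e set \<Rightarrow> nat \<Rightarrow> 'e set" where
  "parity_part E0 E1 p = (if even p then E0 else E1)"

text \<open>An element of Lambda_n is represented by its coefficient function on the basis
  lambda_I, I a subset of {1..n}.\<close>
definition Lam :: "nat \<Rightarrow> (nat set \<Rightarrow> real) set" where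
  "Lam n = {a. \<forall>I. \<not> I \<subseteq> {1..n} \<longrightarrow> a I = 0}"

definition gbasis :: "nat set \<Rightarrow> (nat set \<Rightarrow> real)" where
  "gbasis I = (\<lambda>K. if K = I then 1 else 0)"

definition gone :: "nat set \<Rightarrow> real" where
  "gone = gbasis {}"

text \<open>Sign of lambda_I lambda_J = sign * lambda_{I \<union> J} (I, J disjoint).\<close>
definition gsign :: "nat set \<Rightarrow> nat set \<Rightarrow> real" where
  "gsign I J = (-1) ^ card {(i, j). i \<in> I \<and> j \<in> J \<and> j < i}"

definition gmul :: "(nat set \<Rightarrow> real) \<Rightarrow> (nat set \<Rightarrow> real) \<Rightarrow> (nat set \<Rightarrow> real)" where
  "gmul a b = (\<lambda>K. \<Sum>I\<in>Pow K. gsign I (K - I) * a I * b (K - I))"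

definition geven :: "(nat set \<Rightarrow> real) \<Rightarrow> bool" where
  "geven a \<longleftrightarrow> (\<forall>I. odd (card I) \<longrightarrow> a I = 0)"

definition godd :: "(nat set \<Rightarrow> real) \<Rightarrow> bool" where
  "godd a \<longleftrightarrow> (\<forall>I. even (card I) \<longrightarrow> a I = 0)"

text \<open>Morphisms Lambda_a \<rightarrow> Lambda_b of Gr: parity-preserving unital algebra homomorphisms.\<close>
definition gr_hom :: "nat \<Rightarrow> nat \<Rightarrow> ((nat set \<Rightarrow> real) \<Rightarrow> (nat set \<Rightarrow> real)) \<Rightarrow> bool" where
  "gr_hom a b \<rho> \<longleftrightarrow>
     (\<forall>x\<in>Lam a. \<rho> x \<in> Lam b) \<and>
     (\<forall>x\<in>Lam a. \<forall>y\<in>Lam a. \<rho> (\<lambda>I. x I + y I) = (\<lambda>I. \<rho> x I + \<rho> y I)) \<and>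
     (\<forall>x\<in>Lam a. \<forall>c. \<rho> (\<lambda>I. c * x I) = (\<lambda>I. c * \<rho> x I)) \<and>
     \<rho> gone = gone \<and>
     (\<forall>x\<in>Lam a. \<forall>y\<in>Lam a. \<rho> (gmul x y) = gmul (\<rho> x) (\<rho> y)) \<and>
     (\<forall>x\<in>Lam a. geven x \<longrightarrow> geven (\<rho> x)) \<and>
     (\<forall>x\<in>Lam a. godd x \<longrightarrow> godd (\<rho> x))"

text \<open>Elements of (E0 \<otimes> Lambda_even) \<oplus> (E1 \<otimes> Lambda_odd) for Lambda = Lambda_n, written
  as sum over I of lambda_I \<otimes> v I.\<close>
definition Ebar :: "'e::lcs set \<Rightarrow> 'e set \<Rightarrow> nat \<Rightarrow> (nat set \<Rightarrow> 'e) set" where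
  "Ebar E0 E1 n = {v. \<forall>I. (I \<subseteq> {1..n} \<longrightarrow> v I \<in> parity_part E0 E1 (card I)) \<and>
                          (\<not> I \<subseteq> {1..n} \<longrightarrow> v I = 0)}"

text \<open>E-bar applied to a morphism rho : Lambda_a \<rightarrow> Lambda_b, i.e. id \<otimes> rho.\<close>
definition Ebar_map :: "nat \<Rightarrow> ((nat set \<Rightarrow> real) \<Rightarrow> (nat set \<Rightarrow> real)) \<Rightarrow>
     (nat set \<Rightarrow> 'e::lcs) \<Rightarrow> (nat set \<Rightarrow> 'e)" where
  "Ebar_map a \<rho> v = (\<lambda>J. \<Sum>I\<in>Pow {1..a}. \<rho> (gbasis I) J *\<^sub>R v I)"

definition open_subfunctor :: "enat \<Rightarrow> 'e::lcs set \<Rightarrow> 'e set \<Rightarrow> (nat \<Rightarrow> (nat set \<Rightarrow> 'e) set) \<Rightarrow> bool" where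
  "open_subfunctor k E0 E1 U \<longleftrightarrow>
     (\<forall>n. enat n \<le> k \<longrightarrow> openin (top_of_set (Ebar E0 E1 n)) (U n)) \<and>
     (\<forall>a b \<rho>. enat a \<le> k \<longrightarrow> enat b \<le> k \<longrightarrow> gr_hom a b \<rho> \<longrightarrow> Ebar_map a \<rho> ` U a \<subseteq> U b)"

definition nat_trans ::
  "enat \<Rightarrow> 'e::lcs set \<Rightarrow> 'e set \<Rightarrow> 'f::lcs set \<Rightarrow> 'f set \<Rightarrow> (nat \<Rightarrow> (nat set \<Rightarrow> 'e) set) \<Rightarrow>
   (nat \<Rightarrow> (nat set \<Rightarrow> 'e) \<Rightarrow> (nat set \<Rightarrow> 'f)) \<Rightarrow> bool" where
  "nat_trans k E0 E1 F0 F1 U f \<longleftrightarrow>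
     (\<forall>n. enat n \<le> k \<longrightarrow> f n ` U n \<subseteq> Ebar F0 F1 n) \<and>
     (\<forall>a b \<rho>. enat a \<le> k \<longrightarrow> enat b \<le> k \<longrightarrow> gr_hom a b \<rho> \<longrightarrow>
        (\<forall>v\<in>U a. f b (Ebar_map a \<rho> v) = Ebar_map a \<rho> (f a v)))"

definition diff_quot :: "((nat set \<Rightarrow> 'e::lcs) \<Rightarrow> (nat set \<Rightarrow> 'f::lcs)) \<Rightarrow>
    (nat set \<Rightarrow> 'e) \<Rightarrow> (nat set \<Rightarrow> 'e) \<Rightarrow> real \<Rightarrow> (nat set \<Rightarrow> 'f)" where
  "diff_quot g x h t = (\<lambda>I. (1 / t) *\<^sub>R (g (\<lambda>J. x J + t *\<^sub>R h J) I - g x I))"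

definition dirder :: "((nat set \<Rightarrow> 'e::lcs) \<Rightarrow> (nat set \<Rightarrow> 'f::lcs)) \<Rightarrow>
    (nat set \<Rightarrow> 'e) \<Rightarrow> (nat set \<Rightarrow> 'e) \<Rightarrow> (nat set \<Rightarrow> 'f)" where
  "dirder g x h = (THE L. (diff_quot g x h \<longlongrightarrow> L) (at (0::real)))"

text \<open>Iterated derivative: dn g [h1,...,hn] x = d^n g(x)(h1,...,hn).\<close>
definition dn :: "((nat set \<Rightarrow> 'e::lcs) \<Rightarrow> (nat set \<Rightarrow> 'f::lcs)) \<Rightarrow>
    (nat set \<Rightarrow> 'e) list \<Rightarrow> (nat set \<Rightarrow> 'e) \<Rightarrow> (nat set \<Rightarrow> 'f)" where
  "dn g hs = fold (\<lambda>h g'. (\<lambda>x. dirder g' x h)) hs g"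

definition bastiani_smooth_on :: "(nat set \<Rightarrow> 'e::lcs) set \<Rightarrow> (nat set \<Rightarrow> 'e) set \<Rightarrow>
    ((nat set \<Rightarrow> 'e) \<Rightarrow> (nat set \<Rightarrow> 'f::lcs)) \<Rightarrow> bool" where
  "bastiani_smooth_on V U g \<longleftrightarrow>
     (\<forall>hs x h. set hs \<subseteq> V \<longrightarrow> x \<in> U \<longrightarrow> h \<in> V \<longrightarrow>
        (\<exists>L. (diff_quot (dn g hs) x h \<longlongrightarrow> L) (at 0))) \<and>
     (\<forall>n. continuous_map
        (prod_topology (top_of_set U) (product_topology (\<lambda>_. top_of_set V) {..<n}))
        euclidean (\<lambda>(x, hs). dn g (map hs [0..<n]) x))"

definition lam_tensor :: "(nat set \<Rightarrow> real) \<Rightarrow> 'f::lcs set \<Rightarrow> (nat set \<Rightarrow> 'f) set" where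
  "lam_tensor a S = {(\<lambda>K. a K *\<^sub>R w) | w. w \<in> S}"

definition lam_prod :: "nat set list \<Rightarrow> (nat set \<Rightarrow> real)" where
  "lam_prod Is = foldr (\<lambda>I a. gmul (gbasis I) a) Is gone"

end

theory Submission
  imports Defs
begin


lemma tendsto_fun_iff:
  "((f::'a \<Rightarrow> 'b \<Rightarrow> 'c::topological_space) \<longlongrightarrow> l) F \<longleftrightarrow> (\<forall>i. ((\<lambda>x. f x i) \<longlongrightarrow> l i) F)"
proof -
  have "((f::'a \<Rightarrow> 'b \<Rightarrow> 'c::topological_space) \<longlongrightarrow> l) F \<longleftrightarrow>
     limitin (product_topology (\<lambda>i. euclidean) UNIV) f l F"
    by (simp add: euclidean_product_topology)
  also have "\<dots> \<longleftrightarrow> (\<forall>i. ((\<lambda>x. f x i) \<longlongrightarrow> l i) F)"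
    by (simp add: limitin_componentwise)
  finally show ?thesis .
qed

lemma lcs_scale_const_tendsto:
  fixes g :: "'x \<Rightarrow> 'e::lcs"
  assumes "(g \<longlongrightarrow> a) F"
  shows "((\<lambda>t. c *\<^sub>R g t) \<longlongrightarrow> c *\<^sub>R a) F"
proof (rule topological_tendstoI)
  fix W :: "'e set" assume W: "open W" "c *\<^sub>R a \<in> W"
  from scaleR_continuous[OF W] obtain \<epsilon> V where
    V: "\<epsilon> > 0" "open V" "a \<in> V" "\<forall>d y. \<bar>d - c\<bar> < \<epsilon> \<longrightarrow> y \<in> V \<longrightarrow> d *\<^sub>R y \<in> W" by blast
  have "eventually (\<lambda>t. g t \<in> V) F" using assms V(2,3) topological_tendstoD by blast
  then show "eventually (\<lambda>t. c *\<^sub>R g t \<in> W) F"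
    by (rule eventually_mono) (use V in auto)
qed

lemma lcs_scale_var_tendsto:
  fixes v :: "'e::lcs"
  assumes "(g \<longlongrightarrow> c) F"
  shows "((\<lambda>t. g t *\<^sub>R v) \<longlongrightarrow> c *\<^sub>R v) F"
proof (rule topological_tendstoI)
  fix W :: "'e set" assume W: "open W" "c *\<^sub>R v \<in> W"
  from scaleR_continuous[OF W] obtain \<epsilon> V where
    V: "\<epsilon> > 0" "open V" "v \<in> V" "\<forall>d y. \<bar>d - c\<bar> < \<epsilon> \<longrightarrow> y \<in> V \<longrightarrow> d *\<^sub>R y \<in> W" by blast
  have "eventually (\<lambda>t. dist (g t) c < \<epsilon>) F" using assms V(1) tendstoD by blast
  then show "eventually (\<lambda>t. g t *\<^sub>R v \<in> W) F"
    by (rule eventually_mono) (use V in \<open>auto simp: dist_real_def\<close>)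
qed

lemma fun_scale_tendsto:
  fixes g :: "'x \<Rightarrow> 'i \<Rightarrow> 'e::lcs"
  assumes "(g \<longlongrightarrow> L) F"
  shows "((\<lambda>t. \<lambda>J. c J *\<^sub>R g t J) \<longlongrightarrow> (\<lambda>J. c J *\<^sub>R L J)) F"
  using assms by (auto simp: tendsto_fun_iff intro: lcs_scale_const_tendsto)

lemma fun_limit_unique:
  fixes g :: "'x \<Rightarrow> 'i \<Rightarrow> 'e::lcs"
  assumes "(g \<longlongrightarrow> L) F" "(g \<longlongrightarrow> L') F" "F \<noteq> bot"
  shows "L = L'"
proof
  fix J
  show "L J = L' J" using assms tendsto_unique by (fastforce simp: tendsto_fun_iff)
qed

lemma dirder_eq:
  assumes "(diff_quot D w h \<longlongrightarrow> L) (at (0::real))"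
  shows "dirder D w h = L"
  unfolding dirder_def
proof (rule the_equality)
  show "(diff_quot D w h \<longlongrightarrow> L) (at 0)" by fact
  fix L' assume "(diff_quot D w h \<longlongrightarrow> L') (at 0)"
  then show "L' = L" using fun_limit_unique assms by (metis at_neq_bot)
qed

lemma dn_snoc: "dn g (hs @ [h]) = (\<lambda>x. dirder (dn g hs) x h)"
  by (simp add: dn_def)

lemma dn_Nil: "dn g [] = g" by (simp add: dn_def)


lemma super_subspaces: "super_lcs E0 E1 \<Longrightarrow> subspace (parity_part E0 E1 p)"
  by (simp add: super_lcs_def parity_part_def)

lemma Ebar_lin:
  assumes "super_lcs E0 E1" "v \<in> Ebar E0 E1 n" "u \<in> Ebar E0 E1 n"
  shows "(\<lambda>J. a *\<^sub>R v J + b *\<^sub>R u J) \<in> Ebar E0 E1 n"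
  unfolding Ebar_def
proof (intro CollectI allI conjI impI)
  fix I assume "I \<subseteq> {1..n}"
  then have "v I \<in> parity_part E0 E1 (card I)" "u I \<in> parity_part E0 E1 (card I)"
    using assms(2,3) unfolding Ebar_def by blast+
  then show "a *\<^sub>R v I + b *\<^sub>R u I \<in> parity_part E0 E1 (card I)"
    using super_subspaces[OF assms(1)] by (intro subspace_add subspace_scale)
next
  fix I assume "\<not> I \<subseteq> {1..n}"
  then have "v I = 0" "u I = 0"
    using assms(2,3) unfolding Ebar_def by blast+
  then show "a *\<^sub>R v I + b *\<^sub>R u I = 0" by simp
qed

lemma Ebar_scale:
  assumes "super_lcs E0 E1" "v \<in> Ebar E0 E1 n"
  shows "(\<lambda>J. a J *\<^sub>R v J) \<in> Ebar E0 E1 n"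
  unfolding Ebar_def
proof (intro CollectI allI conjI impI)
  fix I assume "I \<subseteq> {1..n}"
  then have "v I \<in> parity_part E0 E1 (card I)"
    using assms(2) unfolding Ebar_def by blast
  then show "a I *\<^sub>R v I \<in> parity_part E0 E1 (card I)"
    using super_subspaces[OF assms(1)] by (intro subspace_scale)
next
  fix I assume "\<not> I \<subseteq> {1..n}"
  then have "v I = 0"
    using assms(2) unfolding Ebar_def by blast
  then show "a I *\<^sub>R v I = 0" by simp
qed

lemma super_closed:
  assumes "super_lcs E0 E1"
  shows "closed (parity_part E0 E1 q)"
proof -
  from assms obtain p where p: "continuous_on UNIV p" "\<forall>a\<in>E0. \<forall>b\<in>E1. p (a + b) = a"
    and dec: "\<forall>v. \<exists>a\<in>E0. \<exists>b\<in>E1. v = a + b" and s: "subspace E0" "subspace E1"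
    using assms unfolding super_lcs_def by (elim conjE exE) (rule that)
  have z0: "0 \<in> E0" "0 \<in> E1" using s subspace_0 by blast+
  have "E0 = {v. p v = v}"
  proof safe
    fix v assume "v \<in> E0"
    then have "p (v + 0) = v" using p(2) z0 by blast
    then show "p v = v" by simp
  next
    fix v assume pv: "p v = v"
    from dec obtain a b where ab: "a \<in> E0" "b \<in> E1" "v = a + b" by blast
    then have "p v = a" using p(2) by blast
    then have "v = a" using pv by simp
    then show "v \<in> E0" using ab(1) by simp
  qed
  moreover have "E1 = {v. p v = 0}"
  proof safe
    fix v assume "v \<in> E1"
    then have "p (0 + v) = 0" using p(2) z0 by blast
    then show "p v = 0" by simp
  next
    fix v assume pv: "p v = 0"
    from dec obtain a b where ab: "a \<in> E0" "b \<in> E1" "v = a + b" by blast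
    then have "p v = a" using p(2) by blast
    then have "a = 0" using pv by simp
    then have "v = b" using ab(3) by simp
    then show "v \<in> E1" using ab(2) by simp
  qed
  moreover have "closed {v. p v = v}"
    using closed_Collect_eq[OF p(1) continuous_on_id] by simp
  moreover have "closed {v. p v = 0}"
    using closed_Collect_eq[OF p(1) continuous_on_const] by simp
  ultimately show ?thesis by (simp add: parity_part_def)
qed


lemma Ebar_closed:
  assumes "super_lcs E0 E1"
  shows "closed (Ebar E0 E1 n)"
proof -
  have "Ebar E0 E1 n = (\<Inter>I. {v. v I \<in> (if I \<subseteq> {1..n} then parity_part E0 E1 (card I) else {0})})"
    unfolding Ebar_def set_eq_iff by (simp; meson singletonD singletonI)
  moreover have "closed {v::nat set \<Rightarrow> 'a. v I \<in> (if I \<subseteq> {1..n} then parity_part E0 E1 (card I) else {0})}" for I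
    by (rule closed_vimage[where f="\<lambda>v. v I", unfolded vimage_def])
       (auto simp: super_closed[OF assms])
  ultimately show ?thesis by auto
qed

lemma line_tendsto:
  fixes w h :: "'i \<Rightarrow> 'e::lcs"
  shows "((\<lambda>t::real. \<lambda>J. w J + t *\<^sub>R h J) \<longlongrightarrow> w) (at 0)"
proof -
  have "((\<lambda>t::real. w J + t *\<^sub>R h J) \<longlongrightarrow> w J + 0 *\<^sub>R h J) (at 0)" for J
    by (rule tendsto_add[OF tendsto_const lcs_scale_var_tendsto[OF tendsto_ident_at]])
  then show ?thesis by (simp add: tendsto_fun_iff)
qed

lemma line_eventually:
  assumes "super_lcs E0 E1" "openin (top_of_set (Ebar E0 E1 n)) W" "w \<in> W" "h \<in> Ebar E0 E1 n"
  shows "eventually (\<lambda>t::real. (\<lambda>J. w J + t *\<^sub>R h J) \<in> W) (at 0)"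
proof -
  from assms(2) obtain O' where O: "open O'" "W = O' \<inter> Ebar E0 E1 n" by (auto simp: openin_open)
  have "eventually (\<lambda>t::real. (\<lambda>J. w J + t *\<^sub>R h J) \<in> O') (at 0)"
    using topological_tendstoD[OF line_tendsto O(1)] assms(3) O(2) by blast
  moreover have "(\<lambda>J. w J + t *\<^sub>R h J) \<in> Ebar E0 E1 n" for t
    using Ebar_lin[OF assms(1), of w n h 1 t] assms O by auto
  ultimately show ?thesis using O(2) by (auto elim: eventually_mono)
qed



lemma ev_nz: "eventually (\<lambda>t::real. t \<noteq> 0) (at 0)"
  by (simp add: eventually_at_filter)

lemma claimA:
  fixes G :: "(nat set \<Rightarrow> 'e::lcs) \<Rightarrow> (nat set \<Rightarrow> 'f::lcs)"
  assumes ev: "\<And>w h. w \<in> W \<Longrightarrow> h \<in> V \<Longrightarrow> eventually (\<lambda>t::real. (\<lambda>J. w J + t *\<^sub>R h J) \<in> W) (at 0)"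
    and ex: "\<And>hs w h. set hs \<subseteq> V \<Longrightarrow> w \<in> W \<Longrightarrow> h \<in> V \<Longrightarrow> \<exists>L. (diff_quot (dn G hs) w h \<longlongrightarrow> L) (at 0)"
    and base: "\<And>w. w \<in> W \<Longrightarrow> G (\<lambda>J. c J *\<^sub>R w J) = (\<lambda>J. c J *\<^sub>R G w J)"
  shows "set hs \<subseteq> V \<Longrightarrow> w \<in> W \<Longrightarrow>
     dn G (map (\<lambda>h J. c J *\<^sub>R h J) hs) (\<lambda>J. c J *\<^sub>R w J) = (\<lambda>J. c J *\<^sub>R dn G hs w J)"
proof (induction hs arbitrary: w rule: rev_induct)
  case Nil
  then show ?case by (simp add: dn_Nil base)
next
  case (snoc h hs)
  define S where "S = (\<lambda>(v::nat set \<Rightarrow> 'e) J. c J *\<^sub>R v J)"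
  have hs: "set hs \<subseteq> V" and h: "h \<in> V" using snoc.prems by auto
  from ex[OF hs snoc.prems(2) h] obtain L where L: "(diff_quot (dn G hs) w h \<longlongrightarrow> L) (at 0)" by blast
  have eq: "eventually (\<lambda>t. diff_quot (dn G (map (\<lambda>h J. c J *\<^sub>R h J) hs)) (\<lambda>J. c J *\<^sub>R w J) (\<lambda>J. c J *\<^sub>R h J) t
        = (\<lambda>I. c I *\<^sub>R diff_quot (dn G hs) w h t I)) (at 0)"
    using ev[OF snoc.prems(2) h]
  proof (rule eventually_mono)
    fix t :: real assume wt: "(\<lambda>J. w J + t *\<^sub>R h J) \<in> W"
    have 1: "(\<lambda>J. c J *\<^sub>R w J + t *\<^sub>R c J *\<^sub>R h J) = (\<lambda>J. c J *\<^sub>R (w J + t *\<^sub>R h J))"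
      by (simp add: scaleR_add_right mult.commute)
    show "diff_quot (dn G (map (\<lambda>h J. c J *\<^sub>R h J) hs)) (\<lambda>J. c J *\<^sub>R w J) (\<lambda>J. c J *\<^sub>R h J) t
        = (\<lambda>I. c I *\<^sub>R diff_quot (dn G hs) w h t I)"
      unfolding diff_quot_def 1
      using snoc.IH[OF hs wt] snoc.IH[OF hs snoc.prems(2)]
      by (simp add: scaleR_diff_right)
  qed
  have "(diff_quot (dn G (map (\<lambda>h J. c J *\<^sub>R h J) hs)) (\<lambda>J. c J *\<^sub>R w J) (\<lambda>J. c J *\<^sub>R h J)
      \<longlongrightarrow> (\<lambda>I. c I *\<^sub>R L I)) (at 0)"
    using Lim_transform_eventually[OF fun_scale_tendsto[OF L] eventually_mono[OF eq]] by auto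
  then have "dirder (dn G (map (\<lambda>h J. c J *\<^sub>R h J) hs)) (\<lambda>J. c J *\<^sub>R w J) (\<lambda>J. c J *\<^sub>R h J)
      = (\<lambda>I. c I *\<^sub>R L I)" by (rule dirder_eq)
  moreover have "dirder (dn G hs) w h = L" using L by (rule dirder_eq)
  ultimately show ?case by (simp add: dn_snoc)
qed

lemma claimC:
  fixes G :: "(nat set \<Rightarrow> 'e::lcs) \<Rightarrow> (nat set \<Rightarrow> 'f::lcs)"
  assumes ev: "\<And>w h. w \<in> W \<Longrightarrow> h \<in> V \<Longrightarrow> eventually (\<lambda>t::real. (\<lambda>J. w J + t *\<^sub>R h J) \<in> W) (at 0)"
    and ex: "\<And>hs w h. set hs \<subseteq> V \<Longrightarrow> w \<in> W \<Longrightarrow> h \<in> V \<Longrightarrow> \<exists>L. (diff_quot (dn G hs) w h \<longlongrightarrow> L) (at 0)"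
    and cl: "closed Vf"
    and base: "\<And>w. w \<in> W \<Longrightarrow> G w \<in> Vf"
    and lin: "\<And>u v a b. u \<in> Vf \<Longrightarrow> v \<in> Vf \<Longrightarrow> (\<lambda>J. a *\<^sub>R u J + b *\<^sub>R v J) \<in> Vf"
  shows "set hs \<subseteq> V \<Longrightarrow> w \<in> W \<Longrightarrow> dn G hs w \<in> Vf"
proof (induction hs arbitrary: w rule: rev_induct)
  case Nil
  then show ?case by (simp add: dn_Nil base)
next
  case (snoc h hs)
  have hs: "set hs \<subseteq> V" and h: "h \<in> V" using snoc.prems by auto
  from ex[OF hs snoc.prems(2) h] obtain L where L: "(diff_quot (dn G hs) w h \<longlongrightarrow> L) (at 0)" by blast
  have "eventually (\<lambda>t. diff_quot (dn G hs) w h t \<in> Vf) (at 0)"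
    using ev[OF snoc.prems(2) h]
  proof (rule eventually_mono)
    fix t :: real assume wt: "(\<lambda>J. w J + t *\<^sub>R h J) \<in> W"
    have "(\<lambda>J. (1/t) *\<^sub>R dn G hs (\<lambda>J. w J + t *\<^sub>R h J) J + (- (1/t)) *\<^sub>R dn G hs w J) \<in> Vf"
      by (rule lin) (use snoc.IH[OF hs wt] snoc.IH[OF hs snoc.prems(2)] in auto)
    then show "diff_quot (dn G hs) w h t \<in> Vf"
      unfolding diff_quot_def by (simp add: scaleR_diff_right)
  qed
  then have "L \<in> Vf" using Lim_in_closed_set[OF cl _ _ L] by simp
  moreover have "dirder (dn G hs) w h = L" using L by (rule dirder_eq)
  ultimately show ?case by (simp add: dn_snoc)
qed

lemma claimB:
  fixes G :: "(nat set \<Rightarrow> 'e::lcs) \<Rightarrow> (nat set \<Rightarrow> 'f::lcs)"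
  assumes ev: "\<And>w h. w \<in> W \<Longrightarrow> h \<in> V \<Longrightarrow> eventually (\<lambda>t::real. (\<lambda>J. w J + t *\<^sub>R h J) \<in> W) (at 0)"
    and ex: "\<And>hs w h. set hs \<subseteq> V \<Longrightarrow> w \<in> W \<Longrightarrow> h \<in> V \<Longrightarrow> \<exists>L. (diff_quot (dn G hs) w h \<longlongrightarrow> L) (at 0)"
    and Vsc: "\<And>h a. h \<in> V \<Longrightarrow> (\<lambda>J. a *\<^sub>R h J) \<in> V"
  shows "set (map snd ps) \<subseteq> V \<Longrightarrow> (\<forall>p\<in>set ps. fst p \<noteq> 0) \<Longrightarrow> w \<in> W \<Longrightarrow>
     dn G (map (\<lambda>(a, h) J. a *\<^sub>R h J) ps) w = (\<lambda>J. prod_list (map fst ps) *\<^sub>R dn G (map snd ps) w J)"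
proof (induction ps arbitrary: w rule: rev_induct)
  case Nil
  then show ?case by (simp add: dn_Nil)
next
  case (snoc p ps)
  obtain a h where p: "p = (a, h)" by (cases p)
  define P where "P = prod_list (map fst ps)"
  define D where "D = dn G (map snd ps)"
  define D2 where "D2 = dn G (map (\<lambda>(a, h) J. a *\<^sub>R h J) ps)"
  have hs: "set (map snd ps) \<subseteq> V" and h: "h \<in> V" and a: "a \<noteq> 0"
    and nz: "\<forall>p\<in>set ps. fst p \<noteq> 0" using snoc.prems p by auto
  have IH: "\<And>w. w \<in> W \<Longrightarrow> D2 w = (\<lambda>J. P *\<^sub>R D w J)"
    using snoc.IH[OF hs nz] unfolding D2_def D_def P_def by blast
  from ex[OF hs snoc.prems(3) h] obtain L where L: "(diff_quot D w h \<longlongrightarrow> L) (at 0)"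
    unfolding D_def by blast
  have lim_a: "filterlim (\<lambda>t::real. a * t) (at 0) (at 0)"
    unfolding filterlim_at
  proof
    show "eventually (\<lambda>t. a * t \<in> UNIV \<and> a * t \<noteq> 0) (at (0::real))"
      using ev_nz by (rule eventually_mono) (use a in auto)
    show "((\<lambda>t::real. a * t) \<longlongrightarrow> 0) (at 0)"
      using tendsto_mult[OF tendsto_const[of a] tendsto_ident_at[of 0 UNIV]] by simp
  qed
  have L2: "((\<lambda>t. diff_quot D w h (a * t)) \<longlongrightarrow> L) (at 0)"
    using filterlim_compose[OF L lim_a] .
  have eq: "eventually (\<lambda>t. diff_quot D2 w (\<lambda>J. a *\<^sub>R h J) t
        = (\<lambda>I. (P * a) *\<^sub>R diff_quot D w h (a * t) I)) (at 0)"
    using eventually_conj[OF ev[OF snoc.prems(3) Vsc[OF h, of a]] ev_nz]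
  proof (rule eventually_mono)
    fix t :: real assume wt: "(\<lambda>J. w J + t *\<^sub>R a *\<^sub>R h J) \<in> W \<and> t \<noteq> 0"
    have 1: "(\<lambda>J. w J + t *\<^sub>R a *\<^sub>R h J) = (\<lambda>J. w J + (a * t) *\<^sub>R h J)"
      by (simp add: mult.commute)
    have 2: "(1 / t) *\<^sub>R (P *\<^sub>R x - P *\<^sub>R y) = (P * a) *\<^sub>R ((1 / (a * t)) *\<^sub>R (x - y))" for x y :: 'f
      using a wt by (simp add: scaleR_diff_right)
    show "diff_quot D2 w (\<lambda>J. a *\<^sub>R h J) t
        = (\<lambda>I. (P * a) *\<^sub>R diff_quot D w h (a * t) I)"
      unfolding diff_quot_def using IH[OF conjunct1[OF wt]] IH[OF snoc.prems(3)]
      by (simp add: 1 2 mult.commute)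
  qed
  have "(diff_quot D2 w (\<lambda>J. a *\<^sub>R h J) \<longlongrightarrow> (\<lambda>I. (P * a) *\<^sub>R L I)) (at 0)"
    by (rule Lim_transform_eventually[OF fun_scale_tendsto[OF L2, of "\<lambda>_. P * a"]])
       (use eq in \<open>auto elim: eventually_mono\<close>)
  then have "dirder D2 w (\<lambda>J. a *\<^sub>R h J) = (\<lambda>I. (P * a) *\<^sub>R L I)" by (rule dirder_eq)
  moreover have "dirder D w h = L" using L by (rule dirder_eq)
  ultimately show ?case unfolding p by (simp add: dn_snoc D2_def D_def P_def mult.commute)
qed



definition sc :: "nat \<Rightarrow> real \<Rightarrow> nat set \<Rightarrow> real" where
  "sc j s K = (if j \<in> K then s else 1)"

definition rho :: "nat \<Rightarrow> real \<Rightarrow> (nat set \<Rightarrow> real) \<Rightarrow> (nat set \<Rightarrow> real)" where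
  "rho j s a = (\<lambda>K. sc j s K * a K)"

lemma sc_split: "I \<subseteq> K \<Longrightarrow> sc j s K = sc j s I * sc j s (K - I)"
  by (auto simp: sc_def)

lemma rho_hom: "gr_hom m m (rho j s)"
  unfolding gr_hom_def
proof (intro conjI ballI allI impI)
  fix x assume "x \<in> Lam m" then show "rho j s x \<in> Lam m" by (auto simp: Lam_def rho_def)
next
  fix x y show "rho j s (\<lambda>I. x I + y I) = (\<lambda>I. rho j s x I + rho j s y I)"
    by (auto simp: rho_def algebra_simps)
next
  fix x c show "rho j s (\<lambda>I. c * x I) = (\<lambda>I. c * rho j s x I)"
    by (auto simp: rho_def algebra_simps)
next
  show "rho j s gone = gone" by (auto simp: rho_def gone_def gbasis_def sc_def)
next
  fix x y show "rho j s (gmul x y) = gmul (rho j s x) (rho j s y)"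
    unfolding rho_def gmul_def
  proof
    fix K
    have "sc j s K * (\<Sum>I\<in>Pow K. gsign I (K - I) * x I * y (K - I))
        = (\<Sum>I\<in>Pow K. sc j s K * (gsign I (K - I) * x I * y (K - I)))"
      by (simp add: sum_distrib_left)
    also have "\<dots> = (\<Sum>I\<in>Pow K. gsign I (K - I) * (sc j s I * x I) * (sc j s (K - I) * y (K - I)))"
      by (rule sum.cong) (auto simp: sc_split[of _ K j s])
    finally show "sc j s K * (\<Sum>I\<in>Pow K. gsign I (K - I) * x I * y (K - I))
        = (\<Sum>I\<in>Pow K. gsign I (K - I) * (sc j s I * x I) * (sc j s (K - I) * y (K - I)))" .
  qed
next
  fix x assume "geven x" then show "geven (rho j s x)" by (auto simp: geven_def rho_def)
next
  fix x assume "godd x" then show "godd (rho j s x)" by (auto simp: godd_def rho_def)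
qed

lemma Ebar_map_rho:
  assumes "v \<in> Ebar E0 E1 m"
  shows "Ebar_map m (rho j s) v = (\<lambda>J. sc j s J *\<^sub>R v J)"
proof
  fix J
  have "Ebar_map m (rho j s) v J = (\<Sum>I\<in>Pow {1..m}. (if I = J then sc j s J *\<^sub>R v J else 0))"
    unfolding Ebar_map_def rho_def gbasis_def by (rule sum.cong) auto
  also have "\<dots> = sc j s J *\<^sub>R v J"
    using assms by (auto simp: Ebar_def)
  finally show "Ebar_map m (rho j s) v J = sc j s J *\<^sub>R v J" .
qed

lemma incl_hom: "gr_hom 0 m id"
  unfolding gr_hom_def by (auto simp: Lam_def)

lemma Ebar_map_incl:
  assumes "v \<in> Ebar E0 E1 0"
  shows "Ebar_map 0 id v = v"
proof
  fix J
  have "Ebar_map 0 id v J = gbasis {} J *\<^sub>R v {}" by (simp add: Ebar_map_def)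
  also have "\<dots> = v J" using assms by (auto simp: gbasis_def Ebar_def)
  finally show "Ebar_map 0 id v J = v J" .
qed

lemma gmul_gbasis:
  assumes "finite I" "finite J" "I \<inter> J = {}"
  shows "gmul (gbasis I) (\<lambda>K. \<sigma> * gbasis J K) = (\<lambda>K. (\<sigma> * gsign I J) * gbasis (I \<union> J) K)"
proof
  fix K
  show "gmul (gbasis I) (\<lambda>K. \<sigma> * gbasis J K) K = (\<sigma> * gsign I J) * gbasis (I \<union> J) K"
  proof (cases "finite K")
    case True
    have "gmul (gbasis I) (\<lambda>K. \<sigma> * gbasis J K) K
        = (\<Sum>I'\<in>Pow K. if I' = I then gsign I (K - I) * (\<sigma> * gbasis J (K - I)) else 0)"
      unfolding gmul_def by (rule sum.cong) (auto simp: gbasis_def)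
    also have "\<dots> = (if I \<subseteq> K then gsign I (K - I) * (\<sigma> * gbasis J (K - I)) else 0)"
      using True by simp
    also have "\<dots> = (\<sigma> * gsign I J) * gbasis (I \<union> J) K"
    proof (cases "K = I \<union> J")
      case True then show ?thesis using assms(3) by (auto simp: gbasis_def Un_Diff)
    next
      case False
      then have "\<not> (I \<subseteq> K \<and> K - I = J)" by auto
      then show ?thesis using False by (auto simp: gbasis_def)
    qed
    finally show ?thesis .
  next
    case False
    then have "infinite (Pow K)" by simp
    moreover have "K \<noteq> I \<union> J" using False assms by auto
    ultimately show ?thesis by (simp add: gmul_def gbasis_def)
  qed
qed

definition pdisj :: "nat set list \<Rightarrow> bool" where
  "pdisj Is \<longleftrightarrow> (\<forall>a<length Is. \<forall>b<length Is. a \<noteq> b \<longrightarrow> Is ! a \<inter> Is ! b = {})"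

lemma lam_prod_disj:
  "(\<forall>I\<in>set Is. finite I) \<Longrightarrow> pdisj Is \<Longrightarrow>
     \<exists>\<sigma>. \<sigma> \<noteq> 0 \<and> lam_prod Is = (\<lambda>K. \<sigma> * gbasis (\<Union>(set Is)) K)"
proof (induction Is)
  case Nil
  then show ?case by (intro exI[of _ 1]) (simp add: lam_prod_def gone_def)
next
  case (Cons I Is)
  have "pdisj Is" using Cons.prems(2) unfolding pdisj_def
  proof (intro allI impI)
    fix a b assume *: "\<forall>a<length (I # Is). \<forall>b<length (I # Is). a \<noteq> b \<longrightarrow> (I # Is) ! a \<inter> (I # Is) ! b = {}"
      "a < length Is" "b < length Is" "a \<noteq> b"
    then show "Is ! a \<inter> Is ! b = {}" using *(1)[rule_format, of "Suc a" "Suc b"] by simp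
  qed
  then obtain \<sigma> where s: "\<sigma> \<noteq> 0" "lam_prod Is = (\<lambda>K. \<sigma> * gbasis (\<Union>(set Is)) K)"
    using Cons by auto
  have dj: "I \<inter> \<Union>(set Is) = {}"
  proof -
    have "I \<inter> Is ! b = {}" if "b < length Is" for b
      using Cons.prems(2) that unfolding pdisj_def
      by (metis Suc_less_eq length_Cons nat.distinct(1) nth_Cons_0 nth_Cons_Suc zero_less_Suc)
    then show ?thesis by (auto simp: in_set_conv_nth disjoint_iff)
  qed
  have fin: "finite I" "finite (\<Union>(set Is))" using Cons.prems(1) by auto
  have "lam_prod (I # Is) = gmul (gbasis I) (lam_prod Is)" by (simp add: lam_prod_def)
  also have "\<dots> = (\<lambda>K. (\<sigma> * gsign I (\<Union>(set Is))) * gbasis (\<Union>(set (I # Is))) K)"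
    unfolding s(2) by (simp add: gmul_gbasis[OF fin dj])
  finally show ?case using s(1) by (intro exI[of _ "\<sigma> * gsign I (\<Union>(set Is))"]) (simp add: gsign_def)
qed



theorem mainTheorem2:
  fixes k :: enat
    and E0 E1 :: "'e::lcs set" and F0 F1 :: "'f::lcs set"
    and U :: "nat \<Rightarrow> (nat set \<Rightarrow> 'e) set"
    and f :: "nat \<Rightarrow> (nat set \<Rightarrow> 'e) \<Rightarrow> (nat set \<Rightarrow> 'f)"
    and n m :: nat
    and x :: "nat set \<Rightarrow> 'e"
    and I :: "nat \<Rightarrow> nat set"
    and y :: "nat \<Rightarrow> (nat set \<Rightarrow> 'e)"
  assumes E: "super_lcs E0 E1" and F: "super_lcs F0 F1"
    and U: "open_subfunctor k E0 E1 U"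
    and f: "nat_trans k E0 E1 F0 F1 U f"
    and smooth: "\<And>j. enat j \<le> k \<Longrightarrow> bastiani_smooth_on (Ebar E0 E1 j) (U j) (f j)"
    and n: "n \<ge> 1" and m: "m \<ge> 1" and mk: "enat m \<le> k"
    and x: "x \<in> U 0"
    and I: "\<And>i. i \<in> {1..n} \<Longrightarrow> I i \<noteq> {} \<and> I i \<subseteq> {1..m}"
    and y: "\<And>i. i \<in> {1..n} \<Longrightarrow> y i \<in> lam_tensor (gbasis (I i)) (parity_part E0 E1 (card (I i)))"
  shows "dn (f m) (map y [1..<n+1]) x \<in>
           lam_tensor (lam_prod (map I [1..<n+1]))
             (parity_part F0 F1 (card (\<Union>i\<in>{1..n}. I i))) \<and>
         (\<not> disjoint_family_on I {1..n} \<longrightarrow> dn (f m) (map y [1..<n+1]) x = (\<lambda>_. 0))"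
proof -
  define G where "G = f m"
  define V where "V = Ebar E0 E1 m"
  define W where "W = U m"
  define ys where "ys = map y [1..<n+1]"
  define z where "z = dn G ys x"
  define Ku where "Ku = (\<Union>i\<in>{1..n}. I i)"
  have k0: "enat 0 \<le> k" by (simp add: zero_enat_def[symmetric])
  have Wopen: "openin (top_of_set V) W" using U mk unfolding open_subfunctor_def V_def W_def by blast
  then have WV: "W \<subseteq> V" by (auto dest: openin_imp_subset)
  have ev: "\<And>w h. w \<in> W \<Longrightarrow> h \<in> V \<Longrightarrow> eventually (\<lambda>t::real. (\<lambda>J. w J + t *\<^sub>R h J) \<in> W) (at 0)"
    using line_eventually[OF E Wopen[unfolded V_def]] unfolding V_def by blast
  have ex: "\<And>hs w h. set hs \<subseteq> V \<Longrightarrow> w \<in> W \<Longrightarrow> h \<in> V \<Longrightarrow> \<exists>L. (diff_quot (dn G hs) w h \<longlongrightarrow> L) (at 0)"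
  proof -
    fix hs w h assume "set hs \<subseteq> V" "w \<in> W" "h \<in> V"
    then show "\<exists>L. (diff_quot (dn G hs) w h \<longlongrightarrow> L) (at 0)"
      using conjunct1[OF smooth[OF mk, unfolded bastiani_smooth_on_def]]
      unfolding G_def V_def W_def by blast
  qed
  have Vsc: "\<And>h a. h \<in> V \<Longrightarrow> (\<lambda>J. a *\<^sub>R h J) \<in> V"
  proof -
    fix h a assume "h \<in> V"
    then show "(\<lambda>J. a *\<^sub>R h J) \<in> V"
      using Ebar_scale[OF E, where a="\<lambda>_. a"] unfolding V_def by simp
  qed
  have x0: "x \<in> Ebar E0 E1 0"
    using U k0 x unfolding open_subfunctor_def by (auto dest: openin_imp_subset)
  have xW: "x \<in> W"
  proof -
    have "Ebar_map 0 id ` U 0 \<subseteq> U m"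
      using conjunct2[OF U[unfolded open_subfunctor_def]] k0 mk incl_hom[of m] by blast
    then show ?thesis using x Ebar_map_incl[OF x0] unfolding W_def by force
  qed
  have "\<forall>i\<in>{1..n}. \<exists>w. w \<in> parity_part E0 E1 (card (I i)) \<and> y i = (\<lambda>K. gbasis (I i) K *\<^sub>R w)"
  proof
    fix i assume "i \<in> {1..n}"
    then show "\<exists>w. w \<in> parity_part E0 E1 (card (I i)) \<and> y i = (\<lambda>K. gbasis (I i) K *\<^sub>R w)"
      using y[of i] unfolding lam_tensor_def by blast
  qed
  then obtain e where e: "\<And>i. i \<in> {1..n} \<Longrightarrow> e i \<in> parity_part E0 E1 (card (I i)) \<and> y i = (\<lambda>K. gbasis (I i) K *\<^sub>R e i)"
    by metis
  have yV: "y i \<in> V" if "i \<in> {1..n}" for i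
    unfolding V_def Ebar_def
  proof (intro CollectI allI conjI impI)
    fix K assume "K \<subseteq> {1..m}"
    show "y i K \<in> parity_part E0 E1 (card K)"
      using e[OF that] subspace_0[OF super_subspaces[OF E]] by (auto simp: gbasis_def)
  next
    fix K assume "\<not> K \<subseteq> {1..m}"
    then have "K \<noteq> I i" using I[OF that] by blast
    then show "y i K = 0" using e[OF that] by (simp add: gbasis_def)
  qed
  have ysV: "set ys \<subseteq> V" using yV unfolding ys_def by auto
  have GF: "\<And>w. w \<in> W \<Longrightarrow> G w \<in> Ebar F0 F1 m"
    using conjunct1[OF f[unfolded nat_trans_def]] mk unfolding G_def W_def by blast
  have zF: "z \<in> Ebar F0 F1 m" unfolding z_def
    by (rule claimC[OF ev ex Ebar_closed[OF F] GF Ebar_lin[OF F] ysV xW])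
  define a where "a j = card {i\<in>{1..n}. j \<in> I i}" for j
  have key: "sc j 2 K = 2 ^ a j" if zK: "z K \<noteq> 0" for j K
  proof -
    define c where "c = sc j 2"
    have base: "G (\<lambda>J. c J *\<^sub>R w J) = (\<lambda>J. c J *\<^sub>R G w J)" if "w \<in> W" for w
    proof -
      have "f m (Ebar_map m (rho j 2) w) = Ebar_map m (rho j 2) (f m w)"
        using conjunct2[OF f[unfolded nat_trans_def]] mk rho_hom[of m j 2] that unfolding W_def by blast
      then show ?thesis using Ebar_map_rho[of w E0 E1 m j 2] Ebar_map_rho[of "f m w" F0 F1 m j 2]
          that WV GF unfolding G_def c_def V_def by auto
    qed
    have Sx: "(\<lambda>J. c J *\<^sub>R x J) = x"
    proof
      fix J show "c J *\<^sub>R x J = x J"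
        using x0 by (cases "J = {}") (auto simp: c_def sc_def Ebar_def)
    qed
    have A: "dn G (map (\<lambda>h J. c J *\<^sub>R h J) ys) x = (\<lambda>J. c J *\<^sub>R z J)"
      using claimA[OF ev ex base ysV xW] unfolding Sx z_def by simp
    define ps where "ps = map (\<lambda>i. (c (I i), y i)) [1..<n+1]"
    have ps1: "map (\<lambda>h J. c J *\<^sub>R h J) ys = map (\<lambda>(a, h) J. a *\<^sub>R h J) ps"
      unfolding ps_def ys_def map_map
    proof (rule map_cong[OF refl])
      fix i assume "i \<in> set [1..<n+1]"
      then have i: "i \<in> {1..n}" by auto
      show "((\<lambda>h J. c J *\<^sub>R h J) \<circ> y) i = ((\<lambda>(a, h) J. a *\<^sub>R h J) \<circ> (\<lambda>i. (c (I i), y i))) i"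
        using e[OF i] by (auto simp: gbasis_def fun_eq_iff)
    qed
    have ps2: "map snd ps = ys" unfolding ps_def ys_def by (simp add: comp_def)
    have ysV': "set (map snd ps) \<subseteq> V" unfolding ps2 by (rule ysV)
    have ps3: "\<forall>p\<in>set ps. fst p \<noteq> 0" unfolding ps_def by (auto simp: c_def sc_def)
    have B: "dn G (map (\<lambda>(a, h) J. a *\<^sub>R h J) ps) x = (\<lambda>J. prod_list (map fst ps) *\<^sub>R z J)"
    proof -
      have "dn G (map (\<lambda>(a, h) J. a *\<^sub>R h J) ps) x = (\<lambda>J. prod_list (map fst ps) *\<^sub>R dn G (map snd ps) x J)"
        by (rule claimB[OF ev ex Vsc ysV' ps3 xW]) (assumption+)?
      then show ?thesis unfolding ps2 z_def .
    qed
    have P: "prod_list (map fst ps) = 2 ^ a j"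
    proof -
      have "prod_list (map fst ps) = prod_list (map (\<lambda>i. c (I i)) [1..<n+1])"
        unfolding ps_def by (simp add: comp_def)
      also have "\<dots> = (\<Prod>i\<in>set [1..<n+1]. c (I i))"
        by (rule prod.distinct_set_conv_list[symmetric]) simp
      also have "\<dots> = (\<Prod>i\<in>{1..n}. if j \<in> I i then 2 else 1)"
        by (rule prod.cong) (auto simp: c_def sc_def)
      also have "\<dots> = (\<Prod>i\<in>{i\<in>{1..n}. j \<in> I i}. 2)"
        using prod.inter_filter[of "{1..n}" "\<lambda>_. (2::real)" "\<lambda>i. j \<in> I i"] by simp
      also have "\<dots> = 2 ^ a j" by (simp add: a_def)
      finally show ?thesis .
    qed
    have "(\<lambda>J. c J *\<^sub>R z J) = dn G (map (\<lambda>h J. c J *\<^sub>R h J) ys) x" using A by simp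
    also have "\<dots> = dn G (map (\<lambda>(a, h) J. a *\<^sub>R h J) ps) x" by (simp only: ps1)
    also have "\<dots> = (\<lambda>J. 2 ^ a j *\<^sub>R z J)" by (simp only: B P)
    finally have "c K *\<^sub>R z K = 2 ^ a j *\<^sub>R z K" by (rule fun_cong)
    then show ?thesis using zK unfolding c_def by simp
  qed
  have aK: "(j \<in> K \<longrightarrow> a j = 1) \<and> (j \<notin> K \<longrightarrow> a j = 0)" if "z K \<noteq> 0" for j K
  proof (cases "j \<in> K")
    case True
    then have "(2::real) ^ a j = 2 ^ 1" using key[OF that, of j] by (simp add: sc_def)
    then show ?thesis using True by (simp only: power_inject_exp) simp
  next
    case False
    then have "(2::real) ^ a j = 2 ^ 0" using key[OF that, of j] by (simp add: sc_def)
    then show ?thesis using False by (simp only: power_inject_exp) simp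
  qed
  have a0: "a j = 0 \<longleftrightarrow> j \<notin> Ku" for j
    unfolding a_def Ku_def by auto
  have zK: "z K = 0" if "K \<noteq> Ku" for K
  proof (rule ccontr)
    assume nz: "z K \<noteq> 0"
    have "K = Ku"
    proof
      show "K \<subseteq> Ku" using aK[OF nz] a0 by force
      show "Ku \<subseteq> K" using aK[OF nz] a0 by force
    qed
    then show False using that by simp
  qed
  have part2: "z = (\<lambda>_. 0)" if nd: "\<not> disjoint_family_on I {1..n}"
  proof
    fix K
    from nd obtain i i' where ii: "i \<in> {1..n}" "i' \<in> {1..n}" "i \<noteq> i'" "I i \<inter> I i' \<noteq> {}"
      unfolding disjoint_family_on_def by blast
    then obtain j where j: "j \<in> I i" "j \<in> I i'" by blast
    have "{i, i'} \<subseteq> {i\<in>{1..n}. j \<in> I i}" using ii j by auto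
    then have "card {i, i'} \<le> a j" unfolding a_def by (intro card_mono) auto
    then have "a j \<ge> 2" using ii(3) by simp
    then show "z K = 0" using aK[of K j] by (cases "j \<in> K") auto
  qed
  have part1: "z \<in> lam_tensor (lam_prod (map I [1..<n+1])) (parity_part F0 F1 (card Ku))"
  proof (cases "disjoint_family_on I {1..n}")
    case False
    then show ?thesis using part2 subspace_0[OF super_subspaces[OF F]] unfolding lam_tensor_def
      by (intro CollectI exI[of _ 0]) auto
  next
    case True
    have "pdisj (map I [1..<n+1])"
      unfolding pdisj_def
    proof (intro allI impI)
      fix a b assume "a < length (map I [1..<n+1])" "b < length (map I [1..<n+1])" "a \<noteq> b"
      then have la: "a < n" "b < n" "a \<noteq> b" by (simp_all del: upt_Suc)
      then have "map I [1..<n+1] ! a = I (Suc a)" "map I [1..<n+1] ! b = I (Suc b)"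
        by (simp_all del: upt_Suc)
      moreover have "I (Suc a) \<inter> I (Suc b) = {}"
        using True la unfolding disjoint_family_on_def by auto
      ultimately show "map I [1..<n+1] ! a \<inter> map I [1..<n+1] ! b = {}" by simp
    qed
    moreover have "\<forall>J\<in>set (map I [1..<n+1]). finite J"
    proof -
      have "finite (I i)" if "i \<in> {1..n}" for i
        using I[OF that] finite_subset[of "I i" "{1..m}"] by simp
      then show ?thesis by (auto simp del: upt_Suc)
    qed
    ultimately obtain \<sigma> where s: "\<sigma> \<noteq> 0"
      "lam_prod (map I [1..<n+1]) = (\<lambda>K. \<sigma> * gbasis (\<Union>(set (map I [1..<n+1]))) K)"
      using lam_prod_disj by blast
    have U': "\<Union>(set (map I [1..<n+1])) = Ku" unfolding Ku_def by (simp del: upt_Suc add: atLeastLessThanSuc_atLeastAtMost)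
    have KuS: "Ku \<subseteq> {1..m}" unfolding Ku_def by (rule UN_least) (meson I)
    have zKu: "z Ku \<in> parity_part F0 F1 (card Ku)" using zF KuS unfolding Ebar_def by blast
    have "z = (\<lambda>K. lam_prod (map I [1..<n+1]) K *\<^sub>R ((1/\<sigma>) *\<^sub>R z Ku))"
    proof
      fix K show "z K = lam_prod (map I [1..<n+1]) K *\<^sub>R ((1/\<sigma>) *\<^sub>R z Ku)"
        unfolding s(2) U' using s(1) zK[of K] by (auto simp: gbasis_def)
    qed
    moreover have "(1/\<sigma>) *\<^sub>R z Ku \<in> parity_part F0 F1 (card Ku)"
      using zKu super_subspaces[OF F] by (intro subspace_scale)
    ultimately show ?thesis unfolding lam_tensor_def by blast
  qed
  show ?thesis using part1 part2 unfolding z_def ys_def G_def Ku_def by simp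
qed


end
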